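(* Let $k\ge1$ and assume that $R_0,\dots,R_k$ (from BCG) have full column rank. Run DR-BCG with the same $A,B,X_0$ (with any choice of the QR factorizations). Then DR-BCG is well defined up to index $k$ (all $S_{j}^TAS_{j}$, $j\le k-1$, are nonsingular), all $\widehat\Phi_j$ ($j\le k$) are nonsingular, and for $j=0,\dots,k$: $$\widehat X_j=X_j,\qquad R_j=Q_j\widehat\Phi_j,\qquad P_j=S_j\widehat\Phi_j,$$ and for $j=1,\dots,k$: $\Upsilon_{j-1}=\widehat\Phi_{j-1}^{-1}\widehat\Pi_{j-1}\widehat\Phi_{j-1}$ and $$\Theta_{j-1}=\widehat\Phi_{j-1}^T\,\widehat\Pi_{j-1}\,\widehat\Phi_{j-1}.$$
   Context: Let $A\in\mathbb{R}^{n\times n}$ be symmetric positive definite, let $B,X_0\in\mathbb{R}^{n\times m}$, and let $X=A^{-1}B$. The block conjugate gradient (BCG) algorithm sets $R_0=B-AX_0$, $P_0=R_0$, and for $k=1,2,\dots$: $\Upsilon_{k-1}=(P_{k-1}^TAP_{k-1})^{-1}(R_{k-1}^TR_{k-1})$, $X_k=X_{k-1}+P_{k-1}\Upsilon_{k-1}$, $R_k=R_{k-1}-AP_{k-1}\Upsilon_{k-1}$, $\Xi_k=(R_{k-1}^TR_{k-1})^{-1}(R_k^TR_k)$, $P_k=R_k+P_{k-1}\Xi_k$. Define $\mathfrak{E}_k=(X-X_k)^TA(X-X_k)$ and $\Theta_k=(R_k^TR_k)\Upsilon_k$. The Dubrulle-R BCG algorithm (DR-BCG) sets $\widehat X_0=X_0$,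 computes a QR factorization $B-AX_0=Q_0\widehat\Phi_0$ ($Q_0$ with orthonormal columns, $\widehat\Phi_0\in\mathbb{R}^{m\times m}$ upper triangular), $S_0=Q_0$, and for $k=1,2,\dots$: $\widehat\Pi_{k-1}=(S_{k-1}^TAS_{k-1})^{-1}$, $\widehat X_k=\widehat X_{k-1}+S_{k-1}\widehat\Pi_{k-1}\widehat\Phi_{k-1}$, a QR factorization $Q_{k-1}-AS_{k-1}\widehat\Pi_{k-1}=Q_k\widehat\Psi_k$, $S_k=Q_k+S_{k-1}\widehat\Psi_k^T$, and $\widehat\Phi_k=\widehat\Psi_k\widehat\Phi_{k-1}$. *)

theory Defs
  imports "HOL-Analysis.Analysis"
begin

text \<open>Matrices are HOL-Analysis typed matrices: an n-by-m real matrix has type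
  real^('m::{finite,wellorder})^'n (rows indexed by 'n, columns by 'm).\<close>

definition sym_pos_def_mat :: "real^'n^'n \<Rightarrow> bool" where
  "sym_pos_def_mat A \<longleftrightarrow> transpose A = A \<and> (\<forall>x. x \<noteq> 0 \<longrightarrow> x \<bullet> (A *v x) > 0)"

definition upper_triangular_mat :: "real^('m::{finite,wellorder})^('m::{finite,wellorder}) \<Rightarrow> bool" where
  "upper_triangular_mat M \<longleftrightarrow> (\<forall>i j. j < i \<longrightarrow> M $ i $ j = 0)"

definition orthonormal_cols :: "real^('m::{finite,wellorder})^'n \<Rightarrow> bool" where
  "orthonormal_cols Q \<longleftrightarrow> transpose Q ** Q = mat 1"

definition is_QR :: "real^('m::{finite,wellorder})^'n \<Rightarrow> real^('m::{finite,wellorder})^'n \<Rightarrow> real^('m::{finite,wellorder})^('m::{finite,wellorder}) \<Rightarrow> bool" where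
  "is_QR M Q R \<longleftrightarrow> orthonormal_cols Q \<and> upper_triangular_mat R \<and> M = Q ** R"

definition bcg_Upsilon :: "real^'n^'n \<Rightarrow> real^('m::{finite,wellorder})^'n \<Rightarrow> real^('m::{finite,wellorder})^'n \<Rightarrow> real^('m::{finite,wellorder})^('m::{finite,wellorder})" where
  "bcg_Upsilon A R P = matrix_inv (transpose P ** A ** P) ** (transpose R ** R)"

definition bcg_step :: "real^'n^'n \<Rightarrow> (real^('m::{finite,wellorder})^'n) \<times> (real^('m::{finite,wellorder})^'n) \<times> (real^('m::{finite,wellorder})^'n)
    \<Rightarrow> (real^('m::{finite,wellorder})^'n) \<times> (real^('m::{finite,wellorder})^'n) \<times> (real^('m::{finite,wellorder})^'n)" where
  "bcg_step A st = (case st of (X, R, P) \<Rightarrow>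
     (let U = bcg_Upsilon A R P;
          X' = X + P ** U;
          R' = R - A ** P ** U;
          Xi = matrix_inv (transpose R ** R) ** (transpose R' ** R');
          P' = R' + P ** Xi
      in (X', R', P')))"

primrec bcg :: "real^'n^'n \<Rightarrow> real^('m::{finite,wellorder})^'n \<Rightarrow> real^('m::{finite,wellorder})^'n \<Rightarrow> nat
    \<Rightarrow> (real^('m::{finite,wellorder})^'n) \<times> (real^('m::{finite,wellorder})^'n) \<times> (real^('m::{finite,wellorder})^'n)" where
  "bcg A B X0 0 = (X0, B - A ** X0, B - A ** X0)"
| "bcg A B X0 (Suc k) = bcg_step A (bcg A B X0 k)"

definition bcg_X :: "real^'n^'n \<Rightarrow> real^('m::{finite,wellorder})^'n \<Rightarrow> real^('m::{finite,wellorder})^'n \<Rightarrow> nat \<Rightarrow> real^('m::{finite,wellorder})^'n" where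
  "bcg_X A B X0 k = fst (bcg A B X0 k)"
definition bcg_R :: "real^'n^'n \<Rightarrow> real^('m::{finite,wellorder})^'n \<Rightarrow> real^('m::{finite,wellorder})^'n \<Rightarrow> nat \<Rightarrow> real^('m::{finite,wellorder})^'n" where
  "bcg_R A B X0 k = fst (snd (bcg A B X0 k))"
definition bcg_P :: "real^'n^'n \<Rightarrow> real^('m::{finite,wellorder})^'n \<Rightarrow> real^('m::{finite,wellorder})^'n \<Rightarrow> nat \<Rightarrow> real^('m::{finite,wellorder})^'n" where
  "bcg_P A B X0 k = snd (snd (bcg A B X0 k))"

definition bcg_Ups :: "real^'n^'n \<Rightarrow> real^('m::{finite,wellorder})^'n \<Rightarrow> real^('m::{finite,wellorder})^'n \<Rightarrow> nat \<Rightarrow> real^('m::{finite,wellorder})^('m::{finite,wellorder})" where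
  "bcg_Ups A B X0 k = bcg_Upsilon A (bcg_R A B X0 k) (bcg_P A B X0 k)"
definition bcg_Theta :: "real^'n^'n \<Rightarrow> real^('m::{finite,wellorder})^'n \<Rightarrow> real^('m::{finite,wellorder})^'n \<Rightarrow> nat \<Rightarrow> real^('m::{finite,wellorder})^('m::{finite,wellorder})" where
  "bcg_Theta A B X0 k = (transpose (bcg_R A B X0 k) ** bcg_R A B X0 k) ** bcg_Ups A B X0 k"

text \<open>A run of DR-BCG up to index k (steps 1..k), with arbitrary admissible choices
  of the QR factorizations.  Here PiH j = \<PiH>hat_j and Psi j = \<Psi>hat_j.\<close>
definition drbcg_run ::
  "real^'n^'n \<Rightarrow> real^('m::{finite,wellorder})^'n \<Rightarrow> real^('m::{finite,wellorder})^'n \<Rightarrow> nat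
   \<Rightarrow> (nat \<Rightarrow> real^('m::{finite,wellorder})^'n) \<Rightarrow> (nat \<Rightarrow> real^('m::{finite,wellorder})^'n) \<Rightarrow> (nat \<Rightarrow> real^('m::{finite,wellorder})^'n)
   \<Rightarrow> (nat \<Rightarrow> real^('m::{finite,wellorder})^('m::{finite,wellorder})) \<Rightarrow> (nat \<Rightarrow> real^('m::{finite,wellorder})^('m::{finite,wellorder})) \<Rightarrow> (nat \<Rightarrow> real^('m::{finite,wellorder})^('m::{finite,wellorder})) \<Rightarrow> bool" where
  "drbcg_run A B X0 k Xh Q S Phi Psi PiH \<longleftrightarrow>
     Xh 0 = X0 \<and> is_QR (B - A ** X0) (Q 0) (Phi 0) \<and> S 0 = Q 0 \<and>
     (\<forall>j < k.
        PiH j = matrix_inv (transpose (S j) ** A ** S j) \<and>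
        Xh (Suc j) = Xh j + S j ** PiH j ** Phi j \<and>
        is_QR (Q j - A ** S j ** PiH j) (Q (Suc j)) (Psi (Suc j)) \<and>
        S (Suc j) = Q (Suc j) + S j ** transpose (Psi (Suc j)) \<and>
        Phi (Suc j) = Psi (Suc j) ** Phi j)"

end

theory Submission
  imports Defs
begin

lemma mm_radd: "((A::real^'p^'n) + B) ** (C::real^'q^'p) = A ** C + B ** C"
  by (simp add: matrix_matrix_mult_def vec_eq_iff sum.distrib distrib_right)
lemma mm_rsub: "((A::real^'p^'n) - B) ** (C::real^'q^'p) = A ** C - B ** C"
  by (simp add: matrix_matrix_mult_def vec_eq_iff sum_subtractf left_diff_distrib)
lemma mm_lsub: "(C::real^'p^'n) ** ((A::real^'q^'p) - B) = C ** A - C ** B"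
  by (simp add: matrix_matrix_mult_def vec_eq_iff sum_subtractf right_diff_distrib)
lemma tr_add: "transpose ((A::real^'p^'n) + B) = transpose A + transpose B"
  by (simp add: transpose_def vec_eq_iff)
lemma tr_sub: "transpose ((A::real^'p^'n) - B) = transpose A - transpose B"
  by (simp add: transpose_def vec_eq_iff)

lemma inv_uniq:
  fixes M X :: "real^'m^'m"
  assumes "M ** X = mat 1"
  shows "matrix_inv M = X" "invertible M" "X ** M = mat 1"
proof -
  have XM: "X ** M = mat 1" using assms matrix_left_right_inverse by blast
  show inv: "invertible M" using assms XM invertible_def by blast
  have "M ** matrix_inv M = mat 1 \<and> matrix_inv M ** M = mat 1"
    unfolding matrix_inv_def by (rule someI_ex) (use inv in \<open>simp add: invertible_def\<close>)
  then have e1: "X ** (M ** matrix_inv M) = X" by simp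
  have "X ** (M ** matrix_inv M) = matrix_inv M" by (simp add: matrix_mul_assoc XM)
  with e1 show "matrix_inv M = X" by simp
  show "X ** M = mat 1" by (rule XM)
qed

lemma inv_props:
  fixes M :: "real^'m^'m"
  assumes "invertible M"
  shows "M ** matrix_inv M = mat 1" "matrix_inv M ** M = mat 1" "invertible (matrix_inv M)"
proof -
  have *: "M ** matrix_inv M = mat 1 \<and> matrix_inv M ** M = mat 1"
    unfolding matrix_inv_def by (rule someI_ex) (use assms in \<open>simp add: invertible_def\<close>)
  then show "M ** matrix_inv M = mat 1" "matrix_inv M ** M = mat 1" by auto
  show "invertible (matrix_inv M)" using * invertible_def by blast
qed

lemma rank_inv:
  fixes M :: "real^'m^'m"
  shows "invertible M \<longleftrightarrow> rank M = CARD('m)"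
  by (metis full_rank_injective invertible_left_inverse matrix_left_invertible_injective)

lemma gram_inv:
  fixes A :: "real^'n^'n" and P :: "real^'m^'n"
  assumes A: "\<forall>x. x \<noteq> 0 \<longrightarrow> x \<bullet> (A *v x) > 0" and r: "rank P = CARD('m)"
  shows "invertible (transpose P ** A ** P)"
proof -
  have injP: "inj ((*v) P)" using r full_rank_injective by blast
  have "\<not> (\<exists>x. x \<noteq> 0 \<and> (transpose P ** A ** P) *v x = 0)"
  proof
    assume "\<exists>x. x \<noteq> 0 \<and> (transpose P ** A ** P) *v x = 0"
    then obtain x where x: "x \<noteq> 0" "(transpose P ** A ** P) *v x = 0" by blast
    have Px: "P *v x \<noteq> 0" using injP x(1) by (metis inj_eq matrix_vector_mult_0_right)
    have e: "(transpose P ** A ** P) *v x = transpose P *v (A *v (P *v x))"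
      by (simp only: matrix_vector_mul_assoc matrix_mul_assoc)
    have "x \<bullet> ((transpose P ** A ** P) *v x) = (P *v x) \<bullet> (A *v (P *v x))"
      unfolding e transpose_matrix_vector by (metis dot_lmul_matrix inner_commute)
    then have "(P *v x) \<bullet> (A *v (P *v x)) = 0" using x(2) by simp
    with A Px show False by auto
  qed
  then have "rank (transpose P ** A ** P) = CARD('m)"
    using matrix_nonfull_linear_equations_eq by blast
  then show ?thesis using rank_inv by blast
qed

lemma inv_rank: "invertible (M::real^'m^'m) \<Longrightarrow> rank M = CARD('m)" using rank_inv by blast

lemma bcg_Suc_eqs:
  "bcg_X A B X0 (Suc j) = bcg_X A B X0 j + bcg_P A B X0 j ** bcg_Ups A B X0 j"
  "bcg_R A B X0 (Suc j) = bcg_R A B X0 j - A ** bcg_P A B X0 j ** bcg_Ups A B X0 j"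
  "bcg_P A B X0 (Suc j) = bcg_R A B X0 (Suc j) + bcg_P A B X0 j **
      (matrix_inv (transpose (bcg_R A B X0 j) ** bcg_R A B X0 j) ** (transpose (bcg_R A B X0 (Suc j)) ** bcg_R A B X0 (Suc j)))"
  by (simp_all add: bcg_X_def bcg_R_def bcg_P_def bcg_Ups_def bcg_step_def Let_def split: prod.splits)


lemma mm_rzero: "(C::real^'p^'n) ** (0::real^'q^'p) = 0"
  by (simp add: matrix_matrix_mult_def vec_eq_iff)

lemma absorb: "(A::real^'m^'m) ** B = mat 1 \<Longrightarrow> A ** (B ** (X::real^'q^'m)) = X"
  by (simp add: matrix_mul_assoc)

lemma step:
  fixes A :: "real^'n^'n"
    and R P Q S R' Q' S' P' :: "real^('m::{finite,wellorder})^'n"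
    and Phi Psi PiH U Phi' :: "real^('m::{finite,wellorder})^('m::{finite,wellorder})"
  assumes spd: "\<forall>x. x \<noteq> 0 \<longrightarrow> x \<bullet> (A *v x) > 0"
    and rR': "rank R' = CARD('m)"
    and hR: "R = Q ** Phi" and hP: "P = S ** Phi" and iPhi: "invertible Phi"
    and orth: "transpose P ** R = transpose R ** R"
    and oQ: "transpose Q ** Q = mat 1" and oQ': "transpose Q' ** Q' = mat 1"
    and hPi: "PiH = matrix_inv (transpose S ** A ** S)"
    and hU: "U = matrix_inv (transpose P ** A ** P) ** (transpose R ** R)"
    and hR': "R' = R - A ** P ** U"
    and hQ': "Q - A ** S ** PiH = Q' ** Psi"
    and hS': "S' = Q' + S ** transpose Psi"
    and hPhi': "Phi' = Psi ** Phi"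
    and hP': "P' = R' + P ** (matrix_inv (transpose R ** R) ** (transpose R' ** R'))"
  shows "invertible (transpose S ** A ** S) \<and> U = matrix_inv Phi ** PiH ** Phi
    \<and> (transpose R ** R) ** U = transpose Phi ** PiH ** Phi
    \<and> P ** U = S ** PiH ** Phi \<and> R' = Q' ** Phi' \<and> P' = S' ** Phi'
    \<and> invertible Phi' \<and> transpose P' ** R' = transpose R' ** R'"
proof -
  define Fi where "Fi = matrix_inv Phi"
  have F1: "Phi ** Fi = mat 1" and F2: "Fi ** Phi = mat 1"
    using inv_props[OF iPhi] Fi_def by auto
  have TF1: "transpose Phi ** transpose Fi = mat 1"
    by (metis F2 matrix_transpose_mul transpose_mat)
  have TF2: "transpose Fi ** transpose Phi = mat 1"
    by (metis F1 matrix_transpose_mul transpose_mat)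
  note abs = absorb[OF F1] absorb[OF F2] absorb[OF TF1] absorb[OF TF2]
  have RR: "transpose R ** R = transpose Phi ** Phi"
  proof -
    have "transpose R ** R = transpose Phi ** (transpose Q ** Q) ** Phi"
      by (simp add: hR matrix_transpose_mul matrix_mul_assoc)
    then show ?thesis using oQ by simp
  qed
  have iRR: "invertible (transpose R ** R)"
    unfolding RR by (intro invertible_mult transpose_invertible iPhi)
  have "CARD('m) = rank (transpose P ** R)" using inv_rank[OF iRR] orth by simp
  also have "\<dots> \<le> rank P" using rank_mul_le_left[of "transpose P" R] rank_transpose[of P] by simp
  finally have rP: "rank P = CARD('m)" using rank_bound[of P] by simp
  define G where "G = transpose P ** A ** P"
  have iG: "invertible G" unfolding G_def by (rule gram_inv[OF spd rP])
  define Gi where "Gi = matrix_inv G"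
  have G1: "G ** Gi = mat 1" and G2: "Gi ** G = mat 1" using inv_props[OF iG] Gi_def by auto
  note abs2 = absorb[OF G1] absorb[OF G2]
  have hS: "S = P ** Fi" by (simp add: hP matrix_mul_assoc[symmetric] F1)
  have M: "transpose S ** A ** S = transpose Fi ** G ** Fi"
    by (simp add: hS G_def matrix_transpose_mul matrix_mul_assoc)
  have "(transpose S ** A ** S) ** (Phi ** Gi ** transpose Phi) = mat 1"
    unfolding M by (simp add: matrix_mul_assoc[symmetric] abs abs2 F1 F2 TF1 TF2 G1 G2)
  note iu = inv_uniq[OF this]
  have Pi: "PiH = Phi ** Gi ** transpose Phi" using iu(1) hPi by simp
  have U: "U = Gi ** (transpose Phi ** Phi)" using hU RR Gi_def G_def by simp
  have c1: "U = matrix_inv Phi ** PiH ** Phi"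
    unfolding U Pi Fi_def[symmetric] by (simp add: matrix_mul_assoc[symmetric] abs abs2 F1 F2)
  have c2: "(transpose R ** R) ** U = transpose Phi ** PiH ** Phi"
    unfolding U Pi RR by (simp add: matrix_mul_assoc[symmetric])
  have PU: "P ** U = S ** PiH ** Phi"
    unfolding U Pi hP by (simp add: matrix_mul_assoc[symmetric])
  have R'1: "R' = Q' ** Phi'"
  proof -
    have "R' = Q ** Phi - A ** (S ** PiH ** Phi)"
      using hR' hR PU by (simp add: matrix_mul_assoc[symmetric])
    also have "\<dots> = (Q - A ** S ** PiH) ** Phi" by (simp add: mm_rsub matrix_mul_assoc)
    also have "\<dots> = Q' ** Phi'" by (simp add: hQ' hPhi' matrix_mul_assoc)
    finally show ?thesis .
  qed
  have "CARD('m) \<le> rank Phi'" using rR' R'1 rank_mul_le_right[of Q' Phi'] by simp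
  then have iPhi': "invertible Phi'" using rank_inv rank_bound[of Phi'] by (metis le_antisym min.bounded_iff)
  have RR': "transpose R' ** R' = transpose Phi' ** Phi'"
  proof -
    have "transpose R' ** R' = transpose Phi' ** (transpose Q' ** Q') ** Phi'"
      by (simp add: R'1 matrix_transpose_mul matrix_mul_assoc)
    then show ?thesis using oQ' by simp
  qed
  have "(transpose R ** R) ** (Fi ** transpose Fi) = mat 1"
    unfolding RR by (simp add: matrix_mul_assoc[symmetric] abs F1 F2 TF1 TF2)
  then have iRRe: "matrix_inv (transpose R ** R) = Fi ** transpose Fi" by (rule inv_uniq(1))
  define Xi where "Xi = matrix_inv (transpose R ** R) ** (transpose R' ** R')"
  have TPhi': "transpose Phi' = transpose Phi ** transpose Psi"
    by (simp add: hPhi' matrix_transpose_mul)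
  have Xi: "Xi = Fi ** (transpose Psi ** Phi')"
    unfolding Xi_def iRRe RR' TPhi' by (simp add: matrix_mul_assoc[symmetric] abs TF1 TF2)
  have PXi: "P ** Xi = S ** transpose Psi ** Phi'"
    unfolding Xi hP by (simp add: matrix_mul_assoc[symmetric] abs F1)
  have P'1: "P' = S' ** Phi'"
    using hP' Xi_def PXi R'1 hS' by (simp add: mm_radd)
  have PR': "transpose P ** R' = 0"
  proof -
    have "transpose P ** R' = transpose P ** R - G ** U"
      by (simp add: hR' mm_lsub G_def matrix_mul_assoc)
    also have "\<dots> = 0" unfolding U orth RR by (simp add: matrix_mul_assoc[symmetric] abs2)
    finally show ?thesis .
  qed
  have "transpose P' ** R' = transpose R' ** R' + transpose Xi ** (transpose P ** R')"
    using hP' Xi_def by (simp add: tr_add mm_radd matrix_transpose_mul matrix_mul_assoc)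
  then have orth': "transpose P' ** R' = transpose R' ** R'" using PR' by (simp add: mm_rzero)
  show ?thesis using iu(2) c1 c2 PU R'1 P'1 iPhi' orth' by blast
qed


lemma step_at:
  fixes A :: "real^'n^'n" and B X0 :: "real^('m::{finite,wellorder})^'n"
    and Xh Q S :: "nat \<Rightarrow> real^('m::{finite,wellorder})^'n"
    and Phi Psi PiH :: "nat \<Rightarrow> real^('m::{finite,wellorder})^('m::{finite,wellorder})"
  assumes spd: "sym_pos_def_mat A"
    and rk: "\<forall>j \<le> k. rank (bcg_R A B X0 j) = CARD('m)"
    and run: "drbcg_run A B X0 k Xh Q S Phi Psi PiH"
    and jk: "j < k"
    and I: "Xh j = bcg_X A B X0 j \<and> bcg_R A B X0 j = Q j ** Phi j \<and> bcg_P A B X0 j = S j ** Phi j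
        \<and> invertible (Phi j) \<and> transpose (bcg_P A B X0 j) ** bcg_R A B X0 j = transpose (bcg_R A B X0 j) ** bcg_R A B X0 j"
  shows "invertible (transpose (S j) ** A ** S j)
    \<and> bcg_Ups A B X0 j = matrix_inv (Phi j) ** PiH j ** Phi j
    \<and> bcg_Theta A B X0 j = transpose (Phi j) ** PiH j ** Phi j
    \<and> (Xh (Suc j) = bcg_X A B X0 (Suc j) \<and> bcg_R A B X0 (Suc j) = Q (Suc j) ** Phi (Suc j)
        \<and> bcg_P A B X0 (Suc j) = S (Suc j) ** Phi (Suc j)
        \<and> invertible (Phi (Suc j)) \<and> transpose (bcg_P A B X0 (Suc j)) ** bcg_R A B X0 (Suc j)
           = transpose (bcg_R A B X0 (Suc j)) ** bcg_R A B X0 (Suc j))"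
proof -
  have spd': "\<forall>x. x \<noteq> 0 \<longrightarrow> x \<bullet> (A *v x) > 0" using spd sym_pos_def_mat_def by blast
  have r: "PiH j = matrix_inv (transpose (S j) ** A ** S j)"
      "Xh (Suc j) = Xh j + S j ** PiH j ** Phi j"
      "is_QR (Q j - A ** S j ** PiH j) (Q (Suc j)) (Psi (Suc j))"
      "S (Suc j) = Q (Suc j) + S j ** transpose (Psi (Suc j))"
      "Phi (Suc j) = Psi (Suc j) ** Phi j"
    using run jk unfolding drbcg_run_def by auto
  have oQ: "transpose (Q j) ** Q j = mat 1"
  proof (cases j)
    case 0 then show ?thesis using run unfolding drbcg_run_def is_QR_def orthonormal_cols_def by auto
  next
    case (Suc i)
    then have "is_QR (Q i - A ** S i ** PiH i) (Q (Suc i)) (Psi (Suc i))" using run jk unfolding drbcg_run_def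
      by (metis Suc_lessD)
    then show ?thesis using Suc unfolding is_QR_def orthonormal_cols_def by auto
  qed
  have oQ': "transpose (Q (Suc j)) ** Q (Suc j) = mat 1" and hQ': "Q j - A ** S j ** PiH j = Q (Suc j) ** Psi (Suc j)"
    using r(3) unfolding is_QR_def orthonormal_cols_def by auto
  have rR': "rank (bcg_R A B X0 (Suc j)) = CARD('m)" using rk jk by auto
  have hU: "bcg_Ups A B X0 j = matrix_inv (transpose (bcg_P A B X0 j) ** A ** bcg_P A B X0 j) ** (transpose (bcg_R A B X0 j) ** bcg_R A B X0 j)"
    by (simp add: bcg_Ups_def bcg_Upsilon_def)
  have I1: "bcg_R A B X0 j = Q j ** Phi j" "bcg_P A B X0 j = S j ** Phi j" "invertible (Phi j)"
    "transpose (bcg_P A B X0 j) ** bcg_R A B X0 j = transpose (bcg_R A B X0 j) ** bcg_R A B X0 j"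
    "Xh j = bcg_X A B X0 j" using I by auto
  note st = step[OF spd' rR' I1(1) I1(2) I1(3) I1(4) oQ oQ' r(1) hU bcg_Suc_eqs(2) hQ' r(4) r(5) bcg_Suc_eqs(3)]
  have PU: "bcg_P A B X0 j ** bcg_Ups A B X0 j = S j ** PiH j ** Phi j" using st by blast
  have X: "Xh (Suc j) = bcg_X A B X0 (Suc j)" using r(2) I1(5) bcg_Suc_eqs(1)[of A B X0 j] PU by simp
  have T: "bcg_Theta A B X0 j = transpose (Phi j) ** PiH j ** Phi j"
    unfolding bcg_Theta_def using st by blast
  show ?thesis using st X T by blast
qed


theorem mainTheorem14:
  fixes A :: "real^'n^'n" and B X0 :: "real^('m::{finite,wellorder})^'n"
    and k :: nat
    and Xh Q S :: "nat \<Rightarrow> real^('m::{finite,wellorder})^'n"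
    and Phi Psi PiH :: "nat \<Rightarrow> real^('m::{finite,wellorder})^('m::{finite,wellorder})"
  assumes "sym_pos_def_mat A"
    and "k \<ge> 1"
    and "\<forall>j \<le> k. rank (bcg_R A B X0 j) = CARD(('m::{finite,wellorder}))"
    and "drbcg_run A B X0 k Xh Q S Phi Psi PiH"
  shows "(\<forall>j < k. invertible (transpose (S j) ** A ** S j))
     \<and> (\<forall>j \<le> k. invertible (Phi j))
     \<and> (\<forall>j \<le> k. Xh j = bcg_X A B X0 j
                \<and> bcg_R A B X0 j = Q j ** Phi j
                \<and> bcg_P A B X0 j = S j ** Phi j)
     \<and> (\<forall>j \<in> {1..k}.
          bcg_Ups A B X0 (j - 1) = matrix_inv (Phi (j - 1)) ** PiH (j - 1) ** Phi (j - 1)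
        \<and> bcg_Theta A B X0 (j - 1) = transpose (Phi (j - 1)) ** PiH (j - 1) ** Phi (j - 1))"
proof -
  note spd = assms(1) and rk = assms(3) and run = assms(4)
  define Inv where "Inv j \<longleftrightarrow> Xh j = bcg_X A B X0 j \<and> bcg_R A B X0 j = Q j ** Phi j \<and> bcg_P A B X0 j = S j ** Phi j
        \<and> invertible (Phi j) \<and> transpose (bcg_P A B X0 j) ** bcg_R A B X0 j = transpose (bcg_R A B X0 j) ** bcg_R A B X0 j" for j
  have I0: "Inv 0"
  proof -
    have q: "is_QR (B - A ** X0) (Q 0) (Phi 0)" "Xh 0 = X0" "S 0 = Q 0" using run unfolding drbcg_run_def by auto
    have R0: "bcg_R A B X0 0 = Q 0 ** Phi 0" "bcg_P A B X0 0 = S 0 ** Phi 0" "bcg_X A B X0 0 = X0"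
      "bcg_P A B X0 0 = bcg_R A B X0 0"
      using q by (auto simp: bcg_R_def bcg_P_def bcg_X_def is_QR_def)
    have "CARD('m) \<le> rank (Phi 0)" using rk R0(1) rank_mul_le_right[of "Q 0" "Phi 0"] by (metis le0)
    then have "invertible (Phi 0)" using rank_inv rank_bound[of "Phi 0"] by (metis le_antisym min.bounded_iff)
    then show ?thesis unfolding Inv_def using R0 q by simp
  qed
  have IS: "Inv j \<longrightarrow> Inv (Suc j)" if "j < k" for j
    using step_at[OF spd rk run that] unfolding Inv_def by blast
  have Iall: "Inv j" if "j \<le> k" for j
    using that
  proof (induction j)
    case 0 then show ?case using I0 by simp
  next
    case (Suc j) then show ?case using IS by simp
  qed
  have SA: "invertible (transpose (S j) ** A ** S j) \<and> bcg_Ups A B X0 j = matrix_inv (Phi j) ** PiH j ** Phi j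
    \<and> bcg_Theta A B X0 j = transpose (Phi j) ** PiH j ** Phi j" if "j < k" for j
    using step_at[OF spd rk run that] Iall[of j] that unfolding Inv_def by auto
  show ?thesis
  proof (intro conjI)
    show "\<forall>j<k. invertible (transpose (S j) ** A ** S j)" using SA by blast
    show "\<forall>j\<le>k. invertible (Phi j)" using Iall unfolding Inv_def by blast
    show "\<forall>j\<le>k. Xh j = bcg_X A B X0 j \<and> bcg_R A B X0 j = Q j ** Phi j \<and> bcg_P A B X0 j = S j ** Phi j"
      using Iall unfolding Inv_def by blast
    show "\<forall>j\<in>{1..k}. bcg_Ups A B X0 (j - 1) = matrix_inv (Phi (j - 1)) ** PiH (j - 1) ** Phi (j - 1) \<and>
        bcg_Theta A B X0 (j - 1) = transpose (Phi (j - 1)) ** PiH (j - 1) ** Phi (j - 1)"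
    proof
      fix j assume "j \<in> {1..k}"
      then have "j - 1 < k" by auto
      then show "bcg_Ups A B X0 (j - 1) = matrix_inv (Phi (j - 1)) ** PiH (j - 1) ** Phi (j - 1) \<and>
        bcg_Theta A B X0 (j - 1) = transpose (Phi (j - 1)) ** PiH (j - 1) ** Phi (j - 1)" using SA by blast
    qed
  qed
qed

end
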